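(* Let $d, N, M \ge 1$ be integers, $\sigma \ge 0$, and let $\Lambda \in \mathbb{R}^{d\times d}$ be symmetric positive semidefinite with eigendecomposition $\Lambda = QDQ^\top$, $Q$ orthonormal, $D = \mathrm{diag}([\lambda_1,\dots,\lambda_d])$, $\lambda_1\ge\dots\ge\lambda_d\ge 0$. For $k\in\{0,\dots,d\}$ let $V^{(k)} = \mathrm{diag}([v^{(k)}_1,\dots,v^{(k)}_d])$ with $v^{(k)}_i = \frac{N}{(N+1)\lambda_i + \mathrm{tr}(D)}$ for $i\le k$ and $v^{(k)}_i=0$ for $i>k$, and let $f^{(k)}$ be the model $$f^{(k)}(E) = \left[E + W^{PV}_k E\cdot\frac{E^\top W^{KQ}_k E}{M}\right]_{(d+1),(M+1)},\quad W^{PV}_k = \begin{pmatrix}0_{d\times d} & 0_d\\ 0_d^\top & 1/c_k\end{pmatrix},\quad W^{KQ}_k = \begin{pmatrix} c_k QV^{(k)}Q^\top & 0_d\\ 0_d^\top & 0\end{pmatrix}$$ for some nonzero constant $c_k$ (the optimal rank-$k$ solution). Let $0 \le r \le r' \le d$, $f_1 = f^{(r)}$, $f_2 = f^{(r')}$, and let $w = Qs$ where $s \in \mathbb{R}^d$ satisfies $s_i = 0$ for all $r < i \le d$. Let $x_1,\dots,x_M,x_q \overset{\text{i.i.d.}}{\sim}\mathcal{N}(0,\Lambda)$, independently $\epsilon_1,\dots,\epsilon_M\overset{\text{i.i.d.}}{\sim}\mathcal N(0,\sigma^2)$, and $$\widehat{E} = \begin{pmatrix} x_1 & \cdots & x_M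 & x_q \\ \langle w,x_1\rangle + \epsilon_1 & \cdots & \langle w,x_M\rangle + \epsilon_M & 0\end{pmatrix},$$ and define $\mathcal{L}(f;\widehat E) := \mathbb{E}_{x_1,\epsilon_1,\dots,x_M,\epsilon_M,x_q}\left(f(\widehat E) - \langle w,x_q\rangle\right)^2$. Then $$\mathcal{L}(f_2;\widehat E) - \mathcal{L}(f_1;\widehat E) = \frac1M\left(\|s\|_D^2 + \sigma^2\right)\sum_{i=r+1}^{r'}\left(\frac{N\lambda_i}{(N+1)\lambda_i + \mathrm{tr}(D)}\right)^2.$$
   Context: For a positive semidefinite matrix $A$, $\|x\|_A^2 := x^\top A x$. The model $f^{(k)}$ is the optimal rank-$k$ one-layer linear self-attention solution for in-context linear regression with $N$ pretraining examples per prompt (pretraining tokens from $\mathcal N(0,\Lambda)$, task weights from $\mathcal N(0,I_d)$); at evaluation the normalization factor equals $M$. *)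

theory Defs
  imports "HOL-Probability.Probability"
begin

text \<open>Finite matrices are represented as functions nat => nat => real, with all
  dimensions explicit; indices are 0-based. Vectors are nat => real.\<close>

definition mmul :: "nat \<Rightarrow> (nat \<Rightarrow> nat \<Rightarrow> real) \<Rightarrow> (nat \<Rightarrow> nat \<Rightarrow> real) \<Rightarrow> (nat \<Rightarrow> nat \<Rightarrow> real)" where
  "mmul n A B = (\<lambda>i j. \<Sum>l<n. A i l * B l j)"

definition mtrans :: "(nat \<Rightarrow> nat \<Rightarrow> real) \<Rightarrow> (nat \<Rightarrow> nat \<Rightarrow> real)" where
  "mtrans A = (\<lambda>i j. A j i)"

definition lsa :: "nat \<Rightarrow> nat \<Rightarrow> (nat \<Rightarrow> nat \<Rightarrow> real) \<Rightarrow> (nat \<Rightarrow> nat \<Rightarrow> real)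
    \<Rightarrow> (nat \<Rightarrow> nat \<Rightarrow> real) \<Rightarrow> real" where
  "lsa d M WPV WKQ E =
     E d M + mmul (M+1) (mmul (d+1) WPV E) (mmul (d+1) (mmul (d+1) (mtrans E) WKQ) E) d M / real M"

definition trD :: "nat \<Rightarrow> (nat \<Rightarrow> real) \<Rightarrow> real" where
  "trD d lam = (\<Sum>i<d. lam i)"

text \<open>Diagonal of V^(k) (0-based: entries i < k are nonzero).\<close>
definition Vk :: "nat \<Rightarrow> nat \<Rightarrow> (nat \<Rightarrow> real) \<Rightarrow> nat \<Rightarrow> nat \<Rightarrow> real" where
  "Vk d N lam k i = (if i < k then real N / ((real N + 1) * lam i + trD d lam) else 0)"

definition WPV :: "nat \<Rightarrow> real \<Rightarrow> (nat \<Rightarrow> nat \<Rightarrow> real)" where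
  "WPV d c = (\<lambda>i j. if i = d \<and> j = d then 1 / c else 0)"

definition WKQ :: "nat \<Rightarrow> (nat \<Rightarrow> nat \<Rightarrow> real) \<Rightarrow> (nat \<Rightarrow> real) \<Rightarrow> real \<Rightarrow> (nat \<Rightarrow> nat \<Rightarrow> real)" where
  "WKQ d Q v c = (\<lambda>i j. if i < d \<and> j < d then c * (\<Sum>l<d. Q i l * v l * Q j l) else 0)"

definition fk :: "nat \<Rightarrow> nat \<Rightarrow> nat \<Rightarrow> (nat \<Rightarrow> nat \<Rightarrow> real) \<Rightarrow> (nat \<Rightarrow> real) \<Rightarrow> real \<Rightarrow> nat
    \<Rightarrow> (nat \<Rightarrow> nat \<Rightarrow> real) \<Rightarrow> real" where
  "fk d N M Q lam c k E = lsa d M (WPV d c) (WKQ d Q (Vk d N lam k) c) E"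

definition Ehat :: "nat \<Rightarrow> nat \<Rightarrow> (nat \<Rightarrow> real) \<Rightarrow> (nat \<Rightarrow> nat \<Rightarrow> real) \<Rightarrow> (nat \<Rightarrow> real)
    \<Rightarrow> (nat \<Rightarrow> real) \<Rightarrow> (nat \<Rightarrow> nat \<Rightarrow> real)" where
  "Ehat d M w xs eps xq = (\<lambda>i j.
     if i < d \<and> j < M then xs j i
     else if i = d \<and> j < M then (\<Sum>l<d. w l * xs j l) + eps j
     else if i < d \<and> j = M then xq i
     else 0)"

text \<open>Standard normal on the reals, scaled normal N(0, sigma^2) (sigma >= 0),
  and the (possibly degenerate) Gaussian N(0, Lambda) on R^d, defined as the law of
  A z with z standard normal in R^d and A A^T = Lambda.\<close>
definition std_normal :: "real measure" where
  "std_normal = density lborel std_normal_density"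

definition normal_sigma :: "real \<Rightarrow> real measure" where
  "normal_sigma \<sigma> = distr std_normal borel (\<lambda>z. \<sigma> * z)"

definition gauss_vec :: "nat \<Rightarrow> (nat \<Rightarrow> nat \<Rightarrow> real) \<Rightarrow> (nat \<Rightarrow> real) measure" where
  "gauss_vec d \<Lambda> =
     (let A = (SOME A. \<forall>i<d. \<forall>j<d. (\<Sum>l<d. A i l * A j l) = \<Lambda> i j)
      in distr (PiM {..<d} (\<lambda>_. std_normal)) (PiM {..<d} (\<lambda>_. borel))
           (\<lambda>z. restrict (\<lambda>i. \<Sum>l<d. A i l * z l) {..<d}))"

definition data_measure :: "nat \<Rightarrow> nat \<Rightarrow> (nat \<Rightarrow> nat \<Rightarrow> real) \<Rightarrow> real
    \<Rightarrow> (((nat \<Rightarrow> nat \<Rightarrow> real) \<times> (nat \<Rightarrow> real)) \<times> (nat \<Rightarrow> real)) measure" where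
  "data_measure d M \<Lambda> \<sigma> =
     (PiM {..<M} (\<lambda>_. gauss_vec d \<Lambda>) \<Otimes>\<^sub>M PiM {..<M} (\<lambda>_. normal_sigma \<sigma>)) \<Otimes>\<^sub>M gauss_vec d \<Lambda>"

definition icl_loss :: "nat \<Rightarrow> nat \<Rightarrow> (nat \<Rightarrow> nat \<Rightarrow> real) \<Rightarrow> real \<Rightarrow> (nat \<Rightarrow> real)
    \<Rightarrow> ((nat \<Rightarrow> nat \<Rightarrow> real) \<Rightarrow> real) \<Rightarrow> real" where
  "icl_loss d M \<Lambda> \<sigma> w f =
     (\<integral>((xs, eps), xq). (f (Ehat d M w xs eps xq) - (\<Sum>l<d. w l * xq l))\<^sup>2 \<partial>data_measure d M \<Lambda> \<sigma>)"

end

theory Submission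
  imports Defs
begin

lemma prob_space_std_normal: "prob_space std_normal"
  unfolding std_normal_def by (rule prob_space_normal_density) simp

lemma sets_std_normal[measurable_cong, simp]: "sets std_normal = sets borel"
  unfolding std_normal_def by simp

lemma space_std_normal[simp]: "space std_normal = UNIV"
  unfolding std_normal_def by simp

lemma integrable_std_pow: "integrable std_normal (\<lambda>x. x ^ k)"
  unfolding std_normal_def
  by (subst integrable_density) (auto simp: integrable_std_normal_moment)

lemma integral_std_pow: "integral\<^sup>L std_normal (\<lambda>x. x ^ k) = integral\<^sup>L lborel (\<lambda>x. std_normal_density x * x ^ k)"
  unfolding std_normal_def
  by (subst integral_density) auto

lemma std_m1: "integral\<^sup>L std_normal (\<lambda>x. x) = 0"
  using integral_std_pow[of 1] integral_std_normal_moment_odd[of 0] by simp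
lemma std_m2: "integral\<^sup>L std_normal (\<lambda>x. x^2) = 1"
  using integral_std_pow[of 2] integral_std_normal_moment_even[of 1] by simp
lemma std_m3: "integral\<^sup>L std_normal (\<lambda>x. x^3) = 0"
  using integral_std_pow[of 3] integral_std_normal_moment_odd[of 1] by (simp add: numeral_eq_Suc)
lemma std_m4: "integral\<^sup>L std_normal (\<lambda>x. x^4) = 3"
proof -
  have "integral\<^sup>L std_normal (\<lambda>x. x^4) = fact 4 / (2^2 * fact 2)"
    using integral_std_pow[of 4] integral_std_normal_moment_even[of 2] by simp
  also have "\<dots> = 3" by (simp add: fact_numeral)
  finally show ?thesis .
qed

lemma prod_list_count:
  assumes "finite I" "set as \<subseteq> I"
  shows "prod_list (map f as) = (\<Prod>i\<in>I. f i ^ count_list as i)"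
  using assms(2)
proof (induction as)
  case Nil then show ?case by simp
next
  case (Cons a as)
  have aI: "a \<in> I" using Cons by simp
  have "(\<Prod>i\<in>I. f i ^ count_list (a # as) i) = (\<Prod>i\<in>I. f i ^ count_list as i * (if a = i then f i else 1))"
    by (intro prod.cong) (auto simp: mult.commute)
  also have "\<dots> = (\<Prod>i\<in>I. f i ^ count_list as i) * (\<Prod>i\<in>I. (if a = i then f i else 1))"
    by (rule prod.distrib)
  also have "(\<Prod>i\<in>I. (if a = i then f i else 1)) = f a"
    using aI assms(1) by (simp add: prod.delta)
  finally show ?case using Cons by (simp add: mult.commute)
qed

lemma product_sigma_finite_const: "prob_space N \<Longrightarrow> product_sigma_finite (\<lambda>_. N)"
  unfolding product_sigma_finite_def
  by (simp add: prob_space_imp_sigma_finite)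

lemma pim_integrable_prod:
  fixes F :: "'i \<Rightarrow> 'a \<Rightarrow> real"
  assumes N: "prob_space N" and I: "finite I" and F: "\<And>i. i \<in> I \<Longrightarrow> integrable N (F i)"
  shows "integrable (PiM I (\<lambda>_. N)) (\<lambda>\<omega>. \<Prod>i\<in>I. F i (\<omega> i))"
proof -
  interpret product_sigma_finite "\<lambda>_. N" using product_sigma_finite_const[OF N] .
  show ?thesis using product_integrable_prod[OF I F] by simp
qed

lemma pim_integral_prod:
  fixes F :: "'i \<Rightarrow> 'a \<Rightarrow> real"
  assumes N: "prob_space N" and I: "finite I" and F: "\<And>i. i \<in> I \<Longrightarrow> integrable N (F i)"
  shows "(\<integral>\<omega>. (\<Prod>i\<in>I. F i (\<omega> i)) \<partial>PiM I (\<lambda>_. N)) = (\<Prod>i\<in>I. integral\<^sup>L N (F i))"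
proof -
  interpret product_sigma_finite "\<lambda>_. N" using product_sigma_finite_const[OF N] .
  show ?thesis using product_integral_prod[OF I F] by simp
qed

lemma prod_two_delta:
  fixes f g :: "'a \<Rightarrow> real"
  assumes "finite I" "j \<in> I" "j' \<in> I" "j \<noteq> j'"
  shows "(\<Prod>i\<in>I. (if i = j then f else if i = j' then g else (\<lambda>_. 1)) (\<omega> i)) = f (\<omega> j) * g (\<omega> j')"
proof -
  have "(\<Prod>i\<in>I. (if i = j then f else if i = j' then g else (\<lambda>_. 1)) (\<omega> i))
      = (\<Prod>i\<in>I. (if i = j then f (\<omega> i) else 1) * (if i = j' then g (\<omega> i) else 1))"
    using assms by (intro prod.cong) auto
  also have "\<dots> = f (\<omega> j) * g (\<omega> j')"
    using assms by (simp add: prod.distrib prod.delta')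
  finally show ?thesis .
qed

lemma prod_one_delta:
  fixes f :: "'a \<Rightarrow> real"
  assumes "finite I" "j \<in> I"
  shows "(\<Prod>i\<in>I. (if i = j then f else (\<lambda>_. 1)) (\<omega> i)) = f (\<omega> j)"
proof -
  have "(\<Prod>i\<in>I. (if i = j then f else (\<lambda>_. 1)) (\<omega> i)) = (\<Prod>i\<in>I. (if i = j then f (\<omega> i) else 1))"
    by (intro prod.cong) auto
  then show ?thesis using assms by (simp add: prod.delta')
qed

lemma pim1:
  fixes f :: "'a \<Rightarrow> real"
  assumes N: "prob_space N" and I: "finite I" "j \<in> I" and f: "integrable N f"
  shows "integrable (PiM I (\<lambda>_. N)) (\<lambda>\<omega>. f (\<omega> j))"
    "(\<integral>\<omega>. f (\<omega> j) \<partial>PiM I (\<lambda>_. N)) = integral\<^sup>L N f"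
proof -
  interpret prob_space N by fact
  let ?F = "\<lambda>i. if i = j then f else (\<lambda>_. 1)"
  have F: "\<And>i. i \<in> I \<Longrightarrow> integrable N (?F i)" using f by auto
  show "integrable (PiM I (\<lambda>_. N)) (\<lambda>\<omega>. f (\<omega> j))"
  proof -
    have "integrable (PiM I (\<lambda>_. N)) (\<lambda>\<omega>. \<Prod>i\<in>I. ?F i (\<omega> i))"
      by (rule pim_integrable_prod[OF N I(1)]) (use f in auto)
    then show ?thesis by (simp add: prod_one_delta[OF I])
  qed
  show "(\<integral>\<omega>. f (\<omega> j) \<partial>PiM I (\<lambda>_. N)) = integral\<^sup>L N f"
    using pim_integral_prod[OF N I(1), of ?F] F I
    by (simp add: prod_one_delta[OF I] prod.delta' if_distrib[of "integral\<^sup>L N"] prob_space cong: if_cong)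
qed

lemma pim2:
  fixes f g :: "'a \<Rightarrow> real"
  assumes N: "prob_space N" and I: "finite I" "j \<in> I" "j' \<in> I" "j \<noteq> j'"
    and f: "integrable N f" and g: "integrable N g"
  shows "integrable (PiM I (\<lambda>_. N)) (\<lambda>\<omega>. f (\<omega> j) * g (\<omega> j'))"
    "(\<integral>\<omega>. f (\<omega> j) * g (\<omega> j') \<partial>PiM I (\<lambda>_. N)) = integral\<^sup>L N f * integral\<^sup>L N g"
proof -
  interpret prob_space N by fact
  let ?F = "\<lambda>i. if i = j then f else if i = j' then g else (\<lambda>_. 1)"
  have F: "\<And>i. i \<in> I \<Longrightarrow> integrable N (?F i)" using f g by auto
  show "integrable (PiM I (\<lambda>_. N)) (\<lambda>\<omega>. f (\<omega> j) * g (\<omega> j'))"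
  proof -
    have "integrable (PiM I (\<lambda>_. N)) (\<lambda>\<omega>. \<Prod>i\<in>I. ?F i (\<omega> i))"
      by (rule pim_integrable_prod[OF N I(1)]) (use f g in auto)
    then show ?thesis by (simp add: prod_two_delta[OF I])
  qed
  have "(\<Prod>i\<in>I. integral\<^sup>L N (?F i)) = (\<Prod>i\<in>I. (if i = j then integral\<^sup>L N f else 1) * (if i = j' then integral\<^sup>L N g else 1))"
    using I by (intro prod.cong) (auto simp: prob_space)
  also have "\<dots> = integral\<^sup>L N f * integral\<^sup>L N g"
    using I by (simp add: prod.distrib prod.delta')
  finally show "(\<integral>\<omega>. f (\<omega> j) * g (\<omega> j') \<partial>PiM I (\<lambda>_. N)) = integral\<^sup>L N f * integral\<^sup>L N g"
    using pim_integral_prod[OF N I(1), of ?F] F by (simp add: prod_two_delta[OF I])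
qed

abbreviation Zs :: "'i set \<Rightarrow> ('i \<Rightarrow> real) measure" where
  "Zs I \<equiv> PiM I (\<lambda>_. std_normal)"

definition lfs :: "'i set \<Rightarrow> ('i \<Rightarrow> real) list \<Rightarrow> ('i \<Rightarrow> real) \<Rightarrow> real" where
  "lfs I us = (\<lambda>z. prod_list (map (\<lambda>u. \<Sum>i\<in>I. u i * z i) us))"

lemma prob_space_Zs: "prob_space (Zs I)"
  by (intro prob_space_PiM prob_space_std_normal)

lemma Zs_mono_int:
  assumes "finite I" "set as \<subseteq> I"
  shows "integrable (Zs I) (\<lambda>z. prod_list (map z as))"
proof -
  have "integrable (Zs I) (\<lambda>z. \<Prod>i\<in>I. (\<lambda>x. x ^ count_list as i) (z i))"
    by (rule pim_integrable_prod[OF prob_space_std_normal assms(1)]) (rule integrable_std_pow)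
  then show ?thesis by (simp only: prod_list_count[OF assms])
qed

lemma Zs_lf_int_aux:
  assumes "finite I" "set as \<subseteq> I"
  shows "integrable (Zs I) (\<lambda>z. prod_list (map z as) * lfs I us z)"
  using assms(2)
proof (induction us arbitrary: as)
  case Nil then show ?case using Zs_mono_int[OF assms(1) Nil] by (simp add: lfs_def)
next
  case (Cons u us)
  have eq: "prod_list (map z as) * lfs I (u # us) z = (\<Sum>i\<in>I. u i * (prod_list (map z (i # as)) * lfs I us z))" for z
    by (simp add: lfs_def sum_distrib_left sum_distrib_right ac_simps)
  have "integrable (Zs I) (\<lambda>z. \<Sum>i\<in>I. u i * (prod_list (map z (i # as)) * lfs I us z))"
  proof (rule Bochner_Integration.integrable_sum)
    fix i assume "i \<in> I"
    then have "integrable (Zs I) (\<lambda>z. prod_list (map z (i # as)) * lfs I us z)"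
      using Cons.prems by (intro Cons.IH) auto
    then show "integrable (Zs I) (\<lambda>z. u i * (prod_list (map z (i # as)) * lfs I us z))"
      by (rule integrable_mult_right)
  qed
  then show ?case by (simp only: eq)
qed

lemma Zs_lf_int:
  assumes "finite I"
  shows "integrable (Zs I) (lfs I us)"
  using Zs_lf_int_aux[OF assms, of "[]" us] by simp

lemma std_poly:
  "(\<integral>y. c0 + c1 * y + c2 * y^2 + c3 * y^3 + c4 * y^4 \<partial>std_normal) = c0 + c2 + 3 * c4"
proof -
  interpret prob_space std_normal by (rule prob_space_std_normal)
  have h: "has_bochner_integral std_normal (\<lambda>y. y ^ k) (integral\<^sup>L std_normal (\<lambda>y. y ^ k))" for k
    by (rule has_bochner_integral_integrable[OF integrable_std_pow])
  have h0: "has_bochner_integral std_normal (\<lambda>y. c0) c0"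
    using has_bochner_integral_integrable[of std_normal "\<lambda>y. c0"] prob_space by simp
  have "has_bochner_integral std_normal (\<lambda>y. c0 + c1 * y^1 + c2 * y^2 + c3 * y^3 + c4 * y^4)
     (c0 + c1 * integral\<^sup>L std_normal (\<lambda>y. y ^ 1) + c2 * integral\<^sup>L std_normal (\<lambda>y. y ^ 2)
      + c3 * integral\<^sup>L std_normal (\<lambda>y. y ^ 3) + c4 * integral\<^sup>L std_normal (\<lambda>y. y ^ 4))"
    by (intro has_bochner_integral_add has_bochner_integral_mult_right h h0)
  then have "(\<integral>y. c0 + c1 * y^1 + c2 * y^2 + c3 * y^3 + c4 * y^4 \<partial>std_normal) = 
      c0 + c1 * integral\<^sup>L std_normal (\<lambda>y. y ^ 1) + c2 * integral\<^sup>L std_normal (\<lambda>y. y ^ 2)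
      + c3 * integral\<^sup>L std_normal (\<lambda>y. y ^ 3) + c4 * integral\<^sup>L std_normal (\<lambda>y. y ^ 4)"
    by (rule has_bochner_integral_integral_eq)
  then show ?thesis using std_m1 std_m2 std_m3 std_m4 by simp
qed

lemma sum_upd:
  assumes "finite I" "i \<notin> I"
  shows "(\<Sum>a\<in>insert i I. u a * (x(i := y)) a) = (\<Sum>a\<in>I. u a * x a) + u i * y"
proof -
  have "(\<Sum>a\<in>I. u a * (x(i := y)) a) = (\<Sum>a\<in>I. u a * x a)"
    using assms by (intro sum.cong) auto
  then show ?thesis using assms by (simp add: add.commute)
qed

lemma Zs_M2:
  assumes "finite I"
  shows "(\<integral>z. (\<Sum>a\<in>I. u a * z a) * (\<Sum>a\<in>I. t a * z a) \<partial>Zs I) = (\<Sum>a\<in>I. u a * t a)"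
  using assms
proof (induction I rule: finite_induct)
  case empty then show ?case by simp
next
  case (insert i I)
  interpret product_sigma_finite "\<lambda>_. std_normal" by (rule product_sigma_finite_const[OF prob_space_std_normal])
  interpret PI: prob_space "Zs I" by (rule prob_space_Zs)
  let ?U = "\<lambda>z. \<Sum>a\<in>I. u a * z a" and ?T = "\<lambda>z. \<Sum>a\<in>I. t a * z a"
  have int: "integrable (Zs (insert i I)) (\<lambda>z. (\<Sum>a\<in>insert i I. u a * z a) * (\<Sum>a\<in>insert i I. t a * z a))"
    using Zs_lf_int[of "insert i I" "[u, t]"] insert by (simp add: lfs_def)
  have "(\<integral>z. (\<Sum>a\<in>insert i I. u a * z a) * (\<Sum>a\<in>insert i I. t a * z a) \<partial>Zs (insert i I))
     = (\<integral>x. (\<integral>y. (?U x + u i * y) * (?T x + t i * y) \<partial>std_normal) \<partial>Zs I)"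
    using product_integral_insert[OF insert(1,2) int] by (simp only: sum_upd[OF insert(1,2)])
  also have "\<dots> = (\<integral>x. ?U x * ?T x + u i * t i \<partial>Zs I)"
  proof (rule Bochner_Integration.integral_cong[OF refl])
    fix x
    have "(\<integral>y. (?U x + u i * y) * (?T x + t i * y) \<partial>std_normal)
       = (\<integral>y. ?U x * ?T x + (?U x * t i + u i * ?T x) * y + (u i * t i) * y^2 + 0 * y^3 + 0 * y^4 \<partial>std_normal)"
      by (rule Bochner_Integration.integral_cong) (auto simp: algebra_simps power2_eq_square)
    also have "\<dots> = ?U x * ?T x + u i * t i" by (simp only: std_poly)
    finally show "(\<integral>y. (?U x + u i * y) * (?T x + t i * y) \<partial>std_normal) = ?U x * ?T x + u i * t i" .
  qed
  also have "\<dots> = (\<integral>x. ?U x * ?T x \<partial>Zs I) + u i * t i"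
  proof -
    have "integrable (Zs I) (\<lambda>x. ?U x * ?T x)"
      using Zs_lf_int[of I "[u, t]"] insert by (simp add: lfs_def)
    then show ?thesis by (simp add: PI.prob_space)
  qed
  also have "\<dots> = (\<Sum>a\<in>insert i I. u a * t a)" using insert by simp
  finally show ?case .
qed

lemma Zs_M4:
  assumes "finite I"
  shows "(\<integral>z. (\<Sum>a\<in>I. u a * z a)^2 * (\<Sum>a\<in>I. t a * z a)^2 \<partial>Zs I)
       = (\<Sum>a\<in>I. u a * u a) * (\<Sum>a\<in>I. t a * t a) + 2 * (\<Sum>a\<in>I. u a * t a)^2"
  using assms
proof (induction I rule: finite_induct)
  case empty then show ?case by simp
next
  case (insert i I)
  interpret product_sigma_finite "\<lambda>_. std_normal" by (rule product_sigma_finite_const[OF prob_space_std_normal])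
  interpret PI: prob_space "Zs I" by (rule prob_space_Zs)
  let ?U = "\<lambda>z. \<Sum>a\<in>I. u a * z a" and ?T = "\<lambda>z. \<Sum>a\<in>I. t a * z a"
  have int: "integrable (Zs (insert i I)) (\<lambda>z. (\<Sum>a\<in>insert i I. u a * z a)^2 * (\<Sum>a\<in>insert i I. t a * z a)^2)"
    using Zs_lf_int[of "insert i I" "[u, u, t, t]"] insert by (simp add: lfs_def power2_eq_square ac_simps)
  have "(\<integral>z. (\<Sum>a\<in>insert i I. u a * z a)^2 * (\<Sum>a\<in>insert i I. t a * z a)^2 \<partial>Zs (insert i I))
     = (\<integral>x. (\<integral>y. (?U x + u i * y)^2 * (?T x + t i * y)^2 \<partial>std_normal) \<partial>Zs I)"
    using product_integral_insert[OF insert(1,2) int] by (simp only: sum_upd[OF insert(1,2)])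
  also have "\<dots> = (\<integral>x. ?U x^2 * ?T x^2 + (u i * u i) * (?T x * ?T x) + (t i * t i) * (?U x * ?U x)
        + (4 * u i * t i) * (?U x * ?T x) + 3 * (u i)^2 * (t i)^2 \<partial>Zs I)"
  proof (rule Bochner_Integration.integral_cong[OF refl])
    fix x
    let ?P = "?U x" and ?Q = "?T x" and ?u = "u i" and ?t = "t i"
    have "(\<integral>y. (?P + ?u * y)^2 * (?Q + ?t * y)^2 \<partial>std_normal)
       = (\<integral>y. ?P^2 * ?Q^2 + (2*?P*?Q^2*?u + 2*?P^2*?Q*?t) * y
            + (?P^2*?t^2 + 4*?P*?Q*?u*?t + ?u^2*?Q^2) * y^2
            + (2*?P*?u*?t^2 + 2*?u^2*?Q*?t) * y^3 + (?u^2*?t^2) * y^4 \<partial>std_normal)"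
      by (rule Bochner_Integration.integral_cong) (auto simp: algebra_simps power2_eq_square power3_eq_cube power4_eq_xxxx)
    also have "\<dots> = ?P^2 * ?Q^2 + (?P^2*?t^2 + 4*?P*?Q*?u*?t + ?u^2*?Q^2) + 3 * (?u^2*?t^2)"
      by (simp only: std_poly)
    finally show "(\<integral>y. (?P + ?u * y)^2 * (?Q + ?t * y)^2 \<partial>std_normal) = ?P^2 * ?Q^2 + (?u * ?u) * (?Q * ?Q) + (?t * ?t) * (?P * ?P)
        + (4 * ?u * ?t) * (?P * ?Q) + 3 * ?u^2 * ?t^2"
      by (simp add: algebra_simps power2_eq_square)
  qed
  also have "\<dots> = (\<integral>x. ?U x^2 * ?T x^2 \<partial>Zs I) + (u i * u i) * (\<integral>x. ?T x * ?T x \<partial>Zs I)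
        + (t i * t i) * (\<integral>x. ?U x * ?U x \<partial>Zs I) + (4 * u i * t i) * (\<integral>x. ?U x * ?T x \<partial>Zs I)
        + 3 * (u i)^2 * (t i)^2"
  proof -
    have i4: "integrable (Zs I) (\<lambda>x. ?U x^2 * ?T x^2)"
      using Zs_lf_int[of I "[u, u, t, t]"] insert by (simp add: lfs_def power2_eq_square ac_simps)
    have i2: "integrable (Zs I) (\<lambda>x. (\<Sum>a\<in>I. v a * x a) * (\<Sum>a\<in>I. v' a * x a))" for v v'
      using Zs_lf_int[of I "[v, v']"] insert by (simp add: lfs_def)
    have "has_bochner_integral (Zs I) (\<lambda>x. ?U x^2 * ?T x^2 + (u i * u i) * (?T x * ?T x) + (t i * t i) * (?U x * ?U x)
        + (4 * u i * t i) * (?U x * ?T x) + 3 * (u i)^2 * (t i)^2)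
       ((\<integral>x. ?U x^2 * ?T x^2 \<partial>Zs I) + (u i * u i) * (\<integral>x. ?T x * ?T x \<partial>Zs I)
        + (t i * t i) * (\<integral>x. ?U x * ?U x \<partial>Zs I) + (4 * u i * t i) * (\<integral>x. ?U x * ?T x \<partial>Zs I)
        + 3 * (u i)^2 * (t i)^2)"
    proof -
      have c: "has_bochner_integral (Zs I) (\<lambda>x. 3 * (u i)^2 * (t i)^2) (3 * (u i)^2 * (t i)^2)"
        using has_bochner_integral_integrable[of "Zs I" "\<lambda>x. 3 * (u i)^2 * (t i)^2"] PI.prob_space by simp
      show ?thesis
        by (intro has_bochner_integral_add has_bochner_integral_mult_right c
            has_bochner_integral_integrable i4 i2)
    qed
    then show ?thesis by (rule has_bochner_integral_integral_eq)
  qed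
  also have "\<dots> = (\<Sum>a\<in>insert i I. u a * u a) * (\<Sum>a\<in>insert i I. t a * t a) + 2 * (\<Sum>a\<in>insert i I. u a * t a)^2"
    using insert Zs_M2[OF insert(1), of u u] Zs_M2[OF insert(1), of t t] Zs_M2[OF insert(1), of u t]
    by (simp add: algebra_simps power2_eq_square)
  finally show ?case .
qed

definition lin :: "nat \<Rightarrow> (nat \<Rightarrow> real) \<Rightarrow> (nat \<Rightarrow> real) \<Rightarrow> real" where
  "lin d a x = (\<Sum>i<d. a i * x i)"

definition quad :: "nat \<Rightarrow> (nat \<Rightarrow> nat \<Rightarrow> real) \<Rightarrow> (nat \<Rightarrow> real) \<Rightarrow> (nat \<Rightarrow> real) \<Rightarrow> real" where
  "quad d \<Lambda> a b = (\<Sum>i<d. \<Sum>j<d. a i * \<Lambda> i j * b j)"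

definition Gsq :: "nat \<Rightarrow> (nat \<Rightarrow> nat \<Rightarrow> real) \<Rightarrow> (nat \<Rightarrow> nat \<Rightarrow> real)" where
  "Gsq d \<Lambda> = (SOME A. \<forall>i<d. \<forall>j<d. (\<Sum>l<d. A i l * A j l) = \<Lambda> i j)"

definition Tm :: "nat \<Rightarrow> (nat \<Rightarrow> nat \<Rightarrow> real) \<Rightarrow> (nat \<Rightarrow> real) \<Rightarrow> (nat \<Rightarrow> real)" where
  "Tm d A z = restrict (\<lambda>i. \<Sum>l<d. A i l * z l) {..<d}"

lemma gauss_vec_eq: "gauss_vec d \<Lambda> = distr (Zs {..<d}) (PiM {..<d} (\<lambda>_. borel)) (Tm d (Gsq d \<Lambda>))"
  unfolding gauss_vec_def Let_def Tm_def Gsq_def std_normal_def ..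

lemma Tm_meas[measurable]: "Tm d A \<in> Zs {..<d} \<rightarrow>\<^sub>M PiM {..<d} (\<lambda>_. borel)"
  unfolding Tm_def by measurable

lemma sets_gauss_vec[measurable_cong]: "sets (gauss_vec d \<Lambda>) = sets (PiM {..<d} (\<lambda>_. borel))"
  unfolding gauss_vec_eq by simp

lemma space_gauss_vec: "space (gauss_vec d \<Lambda>) = space (PiM {..<d} (\<lambda>_. borel))"
  unfolding gauss_vec_eq by simp

lemma prob_space_gauss_vec: "prob_space (gauss_vec d \<Lambda>)"
  unfolding gauss_vec_eq
  by (rule prob_space.prob_space_distr[OF prob_space_Zs Tm_meas])

lemma lin_meas[measurable]: "lin d a \<in> borel_measurable (PiM {..<d} (\<lambda>_. borel))"
  unfolding lin_def by measurable

lemma linprod_meas[measurable]: "(\<lambda>x. prod_list (map (\<lambda>a. lin d a x) as)) \<in> borel_measurable (PiM {..<d} (\<lambda>_. borel))"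
  by (induction as) auto

definition At :: "nat \<Rightarrow> (nat \<Rightarrow> nat \<Rightarrow> real) \<Rightarrow> (nat \<Rightarrow> real) \<Rightarrow> (nat \<Rightarrow> real)" where
  "At d A a = (\<lambda>l. \<Sum>i<d. a i * A i l)"

lemma lin_Tm: "lin d a (Tm d A z) = (\<Sum>l\<in>{..<d}. At d A a l * z l)"
proof -
  have "lin d a (Tm d A z) = (\<Sum>i<d. a i * (\<Sum>l<d. A i l * z l))"
    unfolding lin_def Tm_def by (intro sum.cong) auto
  also have "\<dots> = (\<Sum>i<d. \<Sum>l<d. a i * A i l * z l)"
    by (simp add: sum_distrib_left mult.assoc)
  also have "\<dots> = (\<Sum>l<d. \<Sum>i<d. a i * A i l * z l)"
    by (rule sum.swap)
  also have "\<dots> = (\<Sum>l<d. At d A a l * z l)"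
    unfolding At_def by (simp add: sum_distrib_right)
  finally show ?thesis by simp
qed

lemma linprod_Tm: "prod_list (map (\<lambda>a. lin d a (Tm d A z)) as) = lfs {..<d} (map (At d A) as) z"
  by (induction as) (simp_all add: lfs_def lin_Tm)

lemma gv_int:
  "integrable (gauss_vec d \<Lambda>) (\<lambda>x. prod_list (map (\<lambda>a. lin d a x) as))"
  unfolding gauss_vec_eq
  by (subst integrable_distr_eq) (auto simp: linprod_Tm intro: Zs_lf_int)

lemma gv_integral:
  fixes f :: "(nat \<Rightarrow> real) \<Rightarrow> real"
  assumes [measurable]: "f \<in> borel_measurable (PiM {..<d} (\<lambda>_. borel))"
  shows "integral\<^sup>L (gauss_vec d \<Lambda>) f = (\<integral>z. f (Tm d (Gsq d \<Lambda>) z) \<partial>Zs {..<d})"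
  unfolding gauss_vec_eq by (rule integral_distr) auto

context
  fixes d :: nat and \<Lambda> :: "nat \<Rightarrow> nat \<Rightarrow> real"
  assumes exA: "\<exists>A. \<forall>i<d. \<forall>j<d. (\<Sum>l<d. A i l * A j l) = \<Lambda> i j"
begin

lemma Gsq_prop: "\<forall>i<d. \<forall>j<d. (\<Sum>l<d. Gsq d \<Lambda> i l * Gsq d \<Lambda> j l) = \<Lambda> i j"
  unfolding Gsq_def by (rule someI_ex[OF exA])

lemma At_quad: "(\<Sum>l\<in>{..<d}. At d (Gsq d \<Lambda>) a l * At d (Gsq d \<Lambda>) b l) = quad d \<Lambda> a b"
proof -
  let ?A = "Gsq d \<Lambda>"
  have "(\<Sum>l\<in>{..<d}. At d ?A a l * At d ?A b l) = (\<Sum>l<d. \<Sum>i<d. \<Sum>j<d. a i * b j * (?A i l * ?A j l))"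
    unfolding At_def sum_product by (intro sum.cong refl) (simp add: ac_simps)
  also have "\<dots> = (\<Sum>i<d. \<Sum>l<d. \<Sum>j<d. a i * b j * (?A i l * ?A j l))"
    by (rule sum.swap)
  also have "\<dots> = (\<Sum>i<d. \<Sum>j<d. \<Sum>l<d. a i * b j * (?A i l * ?A j l))"
    by (intro sum.cong refl sum.swap)
  also have "\<dots> = (\<Sum>i<d. \<Sum>j<d. a i * b j * (\<Sum>l<d. ?A i l * ?A j l))"
    by (simp add: sum_distrib_left)
  also have "\<dots> = quad d \<Lambda> a b"
    unfolding quad_def using Gsq_prop by (intro sum.cong refl) (auto simp: ac_simps)
  finally show ?thesis .
qed

lemma gv_M2: "(\<integral>x. lin d a x * lin d b x \<partial>gauss_vec d \<Lambda>) = quad d \<Lambda> a b"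
  by (subst gv_integral) (auto simp: lin_Tm Zs_M2 At_quad)

lemma gv_M4: "(\<integral>x. (lin d a x)^2 * (lin d b x)^2 \<partial>gauss_vec d \<Lambda>)
   = quad d \<Lambda> a a * quad d \<Lambda> b b + 2 * (quad d \<Lambda> a b)^2"
  by (subst gv_integral) (auto simp: lin_Tm Zs_M4 At_quad)

end

lemma sets_normal_sigma[measurable_cong, simp]: "sets (normal_sigma \<sigma>) = sets borel"
  unfolding normal_sigma_def by simp

lemma space_normal_sigma[simp]: "space (normal_sigma \<sigma>) = UNIV"
  unfolding normal_sigma_def by simp

lemma prob_space_normal_sigma: "prob_space (normal_sigma \<sigma>)"
  unfolding normal_sigma_def
  by (rule prob_space.prob_space_distr[OF prob_space_std_normal]) simp

lemma ns_int_pow: "integrable (normal_sigma \<sigma>) (\<lambda>e. e ^ k)"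
  unfolding normal_sigma_def
  by (subst integrable_distr_eq) (auto simp: power_mult_distrib intro: integrable_std_pow)

lemma ns_m1: "(\<integral>e. e \<partial>normal_sigma \<sigma>) = 0"
  unfolding normal_sigma_def
  by (subst integral_distr) (auto simp: std_m1)

lemma ns_m2: "(\<integral>e. e * e \<partial>normal_sigma \<sigma>) = \<sigma>^2"
proof -
  have "(\<integral>e. e * e \<partial>normal_sigma \<sigma>) = (\<integral>z. \<sigma>^2 * z^2 \<partial>std_normal)"
    unfolding normal_sigma_def
    by (subst integral_distr) (auto simp: power2_eq_square ac_simps)
  also have "\<dots> = \<sigma>^2" using std_m2 by simp
  finally show ?thesis .
qed

lemma ns_int1: "integrable (normal_sigma \<sigma>) (\<lambda>e. e)"
  using ns_int_pow[of \<sigma> 1] by simp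

lemma ns_int2: "integrable (normal_sigma \<sigma>) (\<lambda>e. e * e)"
  using ns_int_pow[of \<sigma> 2] by (simp add: power2_eq_square)

abbreviation ES :: "nat \<Rightarrow> real \<Rightarrow> (nat \<Rightarrow> real) measure" where
  "ES M \<sigma> \<equiv> PiM {..<M} (\<lambda>_. normal_sigma \<sigma>)"

lemma es_int1: "j < M \<Longrightarrow> integrable (ES M \<sigma>) (\<lambda>e. e j)"
  using pim1(1)[OF prob_space_normal_sigma, where I="{..<M}" and j=j and f="\<lambda>e. e"] ns_int1 by simp

lemma es_m1: "j < M \<Longrightarrow> (\<integral>e. e j \<partial>ES M \<sigma>) = 0"
  using pim1(2)[OF prob_space_normal_sigma, where I="{..<M}" and j=j and f="\<lambda>e. e"] ns_int1 ns_m1 by simp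

lemma es_int2: "j < M \<Longrightarrow> j' < M \<Longrightarrow> integrable (ES M \<sigma>) (\<lambda>e. e j * e j')"
proof (cases "j = j'")
  case True
  assume "j < M"
  then show ?thesis using True pim1(1)[OF prob_space_normal_sigma, where I="{..<M}" and j=j and f="\<lambda>e. e * e"] ns_int2 by simp
next
  case False
  assume "j < M" "j' < M"
  then show ?thesis using False pim2(1)[OF prob_space_normal_sigma, where I="{..<M}" and j=j and j'=j' and f="\<lambda>e. e" and g="\<lambda>e. e"] ns_int1 by simp
qed

lemma es_m2: "j < M \<Longrightarrow> j' < M \<Longrightarrow> (\<integral>e. e j * e j' \<partial>ES M \<sigma>) = (if j = j' then \<sigma>^2 else 0)"
proof (cases "j = j'")
  case True
  assume "j < M"
  then show ?thesis using True pim1(2)[OF prob_space_normal_sigma, where I="{..<M}" and j=j and f="\<lambda>e. e * e"] ns_int2 ns_m2 by simp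
next
  case False
  assume "j < M" "j' < M"
  then show ?thesis using False pim2(2)[OF prob_space_normal_sigma, where I="{..<M}" and j=j and j'=j' and f="\<lambda>e. e" and g="\<lambda>e. e"] ns_int1 ns_m1 by simp
qed

lemma pairprod:
  fixes f :: "'a \<Rightarrow> real" and g :: "'b \<Rightarrow> real"
  assumes MA: "prob_space MA" and MB: "prob_space MB"
    and f: "integrable MA f" and g: "integrable MB g"
  shows "integrable (MA \<Otimes>\<^sub>M MB) (\<lambda>p. f (fst p) * g (snd p))"
    "(\<integral>p. f (fst p) * g (snd p) \<partial>(MA \<Otimes>\<^sub>M MB)) = integral\<^sup>L MA f * integral\<^sup>L MB g"
proof -
  interpret pair_prob_space MA MB unfolding pair_prob_space_def pair_sigma_finite_def using MA MB
    by (simp add: prob_space_imp_sigma_finite)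
  have [measurable]: "f \<in> borel_measurable MA" "g \<in> borel_measurable MB" using f g by auto
  have "(\<integral>\<^sup>+ p. ennreal (norm (f (fst p) * g (snd p))) \<partial>(MA \<Otimes>\<^sub>M MB))
      = (\<integral>\<^sup>+ x. \<integral>\<^sup>+ y. ennreal (norm (f x)) * ennreal (norm (g y)) \<partial>MB \<partial>MA)"
    by (subst M2.nn_integral_fst[symmetric]) (auto simp: abs_mult ennreal_mult)
  also have "\<dots> = (\<integral>\<^sup>+ x. ennreal (norm (f x)) * (\<integral>\<^sup>+ y. ennreal (norm (g y)) \<partial>MB) \<partial>MA)"
    by (subst nn_integral_cmult) auto
  also have "\<dots> = (\<integral>\<^sup>+ x. ennreal (norm (f x)) \<partial>MA) * (\<integral>\<^sup>+ y. ennreal (norm (g y)) \<partial>MB)"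
    by (subst nn_integral_multc) auto
  also have "\<dots> < \<infinity>"
    using f g by (simp add: integrable_iff_bounded ennreal_mult_less_top)
  finally show int: "integrable (MA \<Otimes>\<^sub>M MB) (\<lambda>p. f (fst p) * g (snd p))"
    by (simp add: integrable_iff_bounded)
  have "(\<integral>p. f (fst p) * g (snd p) \<partial>(MA \<Otimes>\<^sub>M MB)) = (\<integral>x. (\<integral>y. f x * g y \<partial>MB) \<partial>MA)"
    using integral_fst'[OF int] by simp
  also have "\<dots> = (\<integral>x. f x * integral\<^sup>L MB g \<partial>MA)" by simp
  also have "\<dots> = integral\<^sup>L MA f * integral\<^sup>L MB g" by simp
  finally show "(\<integral>p. f (fst p) * g (snd p) \<partial>(MA \<Otimes>\<^sub>M MB)) = integral\<^sup>L MA f * integral\<^sup>L MB g" .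
qed

abbreviation XS :: "nat \<Rightarrow> nat \<Rightarrow> (nat \<Rightarrow> nat \<Rightarrow> real) \<Rightarrow> (nat \<Rightarrow> nat \<Rightarrow> real) measure" where
  "XS d M \<Lambda> \<equiv> PiM {..<M} (\<lambda>_. gauss_vec d \<Lambda>)"

definition Pl :: "nat \<Rightarrow> (nat \<Rightarrow> real) list \<Rightarrow> (nat \<Rightarrow> real) \<Rightarrow> real" where
  "Pl d as = (\<lambda>x. prod_list (map (\<lambda>a. lin d a x) as))"

lemma Pl_int: "integrable (gauss_vec d \<Lambda>) (Pl d as)"
  unfolding Pl_def by (rule gv_int)

lemma Pl_append: "Pl d as x * Pl d bs x = Pl d (as @ bs) x"
  unfolding Pl_def by simp

lemma xs_int:
  assumes "j < M" "j' < M"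
  shows "integrable (XS d M \<Lambda>) (\<lambda>xs. Pl d as (xs j) * Pl d bs (xs j'))"
proof (cases "j = j'")
  case True
  then show ?thesis
    using pim1(1)[OF prob_space_gauss_vec, where I="{..<M}" and j=j and f="Pl d (as @ bs)"] assms Pl_int
    by (simp add: Pl_append)
next
  case False
  then show ?thesis
    using pim2(1)[OF prob_space_gauss_vec, where I="{..<M}" and j=j and j'=j' and f="Pl d as" and g="Pl d bs"] assms Pl_int
    by simp
qed

lemma xs_int1:
  assumes "j < M"
  shows "integrable (XS d M \<Lambda>) (\<lambda>xs. Pl d as (xs j))"
  using pim1(1)[OF prob_space_gauss_vec, where I="{..<M}" and j=j and f="Pl d as"] assms Pl_int
  by simp

lemma xs_val_eq:
  assumes "j < M"
  shows "(\<integral>xs. Pl d as (xs j) * Pl d bs (xs j) \<partial>XS d M \<Lambda>) = integral\<^sup>L (gauss_vec d \<Lambda>) (Pl d (as @ bs))"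
  using pim1(2)[OF prob_space_gauss_vec, where I="{..<M}" and j=j and f="Pl d (as @ bs)"] assms Pl_int
  by (simp add: Pl_append)

lemma xs_val_neq:
  assumes "j < M" "j' < M" "j \<noteq> j'"
  shows "(\<integral>xs. Pl d as (xs j) * Pl d bs (xs j') \<partial>XS d M \<Lambda>) = integral\<^sup>L (gauss_vec d \<Lambda>) (Pl d as) * integral\<^sup>L (gauss_vec d \<Lambda>) (Pl d bs)"
  using pim2(2)[OF prob_space_gauss_vec, where I="{..<M}" and j=j and j'=j' and f="Pl d as" and g="Pl d bs"] assms Pl_int
  by simp

lemma prob_space_XS: "prob_space (XS d M \<Lambda>)"
  by (intro prob_space_PiM prob_space_gauss_vec)

lemma prob_space_ES: "prob_space (ES M \<sigma>)"
  by (intro prob_space_PiM prob_space_normal_sigma)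

abbreviation P0 where "P0 d M \<Lambda> \<sigma> \<equiv> XS d M \<Lambda> \<Otimes>\<^sub>M ES M \<sigma>"

lemma prob_space_P0: "prob_space (P0 d M \<Lambda> \<sigma>)"
  by (intro prob_space_pair prob_space_XS prob_space_ES)

lemma p0_int:
  fixes F :: "(nat \<Rightarrow> nat \<Rightarrow> real) \<Rightarrow> real" and G :: "(nat \<Rightarrow> real) \<Rightarrow> real"
  assumes "integrable (XS d M \<Lambda>) F" "integrable (ES M \<sigma>) G"
  shows "integrable (P0 d M \<Lambda> \<sigma>) (\<lambda>p. F (fst p) * G (snd p))"
  using pairprod(1)[where MA="XS d M \<Lambda>" and MB="ES M \<sigma>" and f=F and g=G] prob_space_XS prob_space_ES assms by blast

lemma p0_val:
  fixes F :: "(nat \<Rightarrow> nat \<Rightarrow> real) \<Rightarrow> real" and G :: "(nat \<Rightarrow> real) \<Rightarrow> real"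
  assumes "integrable (XS d M \<Lambda>) F" "integrable (ES M \<sigma>) G"
  shows "(\<integral>p. F (fst p) * G (snd p) \<partial>P0 d M \<Lambda> \<sigma>) = integral\<^sup>L (XS d M \<Lambda>) F * integral\<^sup>L (ES M \<sigma>) G"
  using pairprod(2)[where MA="XS d M \<Lambda>" and MB="ES M \<sigma>" and f=F and g=G] prob_space_XS prob_space_ES assms by blast

lemma p0_hb:
  fixes F :: "(nat \<Rightarrow> nat \<Rightarrow> real) \<Rightarrow> real" and G :: "(nat \<Rightarrow> real) \<Rightarrow> real"
  assumes "integrable (XS d M \<Lambda>) F" "integrable (ES M \<sigma>) G"
  shows "has_bochner_integral (P0 d M \<Lambda> \<sigma>) (\<lambda>p. F (fst p) * G (snd p)) (integral\<^sup>L (XS d M \<Lambda>) F * integral\<^sup>L (ES M \<sigma>) G)"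
  using p0_int[OF assms] p0_val[OF assms] by (simp add: has_bochner_integral_iff)

definition Yj :: "nat \<Rightarrow> (nat \<Rightarrow> real) \<Rightarrow> (nat \<Rightarrow> real) \<Rightarrow> nat \<Rightarrow> (nat \<Rightarrow> nat \<Rightarrow> real) \<times> (nat \<Rightarrow> real) \<Rightarrow> real" where
  "Yj d w q j p = (lin d w (fst p j) + snd p j) * lin d q (fst p j)"

lemma Yj_decomp: "Yj d w q j p = (\<lambda>xs. Pl d [w, q] (xs j)) (fst p) * (\<lambda>_. 1) (snd p) + (\<lambda>xs. Pl d [q] (xs j)) (fst p) * (\<lambda>e. e j) (snd p)"
  unfolding Yj_def Pl_def by (simp add: algebra_simps)

lemma YY_decomp: "Yj d w q j p * Yj d w q j' p =
    (\<lambda>xs. Pl d [w, q] (xs j) * Pl d [w, q] (xs j')) (fst p) * (\<lambda>_. 1) (snd p)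
  + (\<lambda>xs. Pl d [w, q] (xs j) * Pl d [q] (xs j')) (fst p) * (\<lambda>e. e j') (snd p)
  + (\<lambda>xs. Pl d [q] (xs j) * Pl d [w, q] (xs j')) (fst p) * (\<lambda>e. e j) (snd p)
  + (\<lambda>xs. Pl d [q] (xs j) * Pl d [q] (xs j')) (fst p) * (\<lambda>e. e j * e j') (snd p)"
  unfolding Yj_def Pl_def by (simp add: algebra_simps)

lemma es_int0: "integrable (ES M \<sigma>) (\<lambda>_. 1)"
  using prob_space_ES[of M \<sigma>] by (simp add: prob_space_def finite_measure.integrable_const)

lemma Yj_int: "j < M \<Longrightarrow> integrable (P0 d M \<Lambda> \<sigma>) (Yj d w q j)"
  unfolding Yj_decomp[abs_def]
  by (intro Bochner_Integration.integrable_add p0_int es_int0 es_int1 xs_int1)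

lemma YY_int: "j < M \<Longrightarrow> j' < M \<Longrightarrow> integrable (P0 d M \<Lambda> \<sigma>) (\<lambda>p. Yj d w q j p * Yj d w q j' p)"
  unfolding YY_decomp
  by (intro Bochner_Integration.integrable_add p0_int es_int0 es_int1 es_int2 xs_int)

lemma Pl_wqwq: "Pl d [w, q, w, q] x = (lin d w x)^2 * (lin d q x)^2"
  unfolding Pl_def by (simp add: power2_eq_square ac_simps)

lemma Pl_ab: "Pl d [a, b] x = lin d a x * lin d b x"
  unfolding Pl_def by simp

context
  fixes d :: nat and \<Lambda> :: "nat \<Rightarrow> nat \<Rightarrow> real"
  assumes exA: "\<exists>A. \<forall>i<d. \<forall>j<d. (\<Sum>l<d. A i l * A j l) = \<Lambda> i j"
begin

lemma G_wqwq: "integral\<^sup>L (gauss_vec d \<Lambda>) (Pl d [w, q, w, q]) = quad d \<Lambda> w w * quad d \<Lambda> q q + 2 * (quad d \<Lambda> w q)^2"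
  unfolding Pl_wqwq[abs_def] by (rule gv_M4[OF exA])

lemma G_ab: "integral\<^sup>L (gauss_vec d \<Lambda>) (Pl d [a, b]) = quad d \<Lambda> a b"
  unfolding Pl_ab[abs_def] by (rule gv_M2[OF exA])

lemma YY_val:
  assumes "j < M" "j' < M"
  shows "(\<integral>p. Yj d w q j p * Yj d w q j' p \<partial>P0 d M \<Lambda> \<sigma>)
    = (if j = j' then quad d \<Lambda> w w * quad d \<Lambda> q q + 2 * (quad d \<Lambda> w q)^2 + \<sigma>^2 * quad d \<Lambda> q q
       else (quad d \<Lambda> w q)^2)"
proof -
  have i1: "integrable (XS d M \<Lambda>) (\<lambda>xs. Pl d as (xs j) * Pl d bs (xs j'))" for as bs
    using xs_int assms by blast
  have "(\<integral>p. Yj d w q j p * Yj d w q j' p \<partial>P0 d M \<Lambda> \<sigma>) =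
      (\<integral>xs. Pl d [w, q] (xs j) * Pl d [w, q] (xs j') \<partial>XS d M \<Lambda>) * (\<integral>e. 1 \<partial>ES M \<sigma>)
    + (\<integral>xs. Pl d [w, q] (xs j) * Pl d [q] (xs j') \<partial>XS d M \<Lambda>) * (\<integral>e. e j' \<partial>ES M \<sigma>)
    + (\<integral>xs. Pl d [q] (xs j) * Pl d [w, q] (xs j') \<partial>XS d M \<Lambda>) * (\<integral>e. e j \<partial>ES M \<sigma>)
    + (\<integral>xs. Pl d [q] (xs j) * Pl d [q] (xs j') \<partial>XS d M \<Lambda>) * (\<integral>e. e j * e j' \<partial>ES M \<sigma>)"
    unfolding YY_decomp
    by (intro has_bochner_integral_integral_eq has_bochner_integral_add p0_hb i1 es_int0 es_int1 es_int2 assms)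
  also have "\<dots> = (if j = j' then quad d \<Lambda> w w * quad d \<Lambda> q q + 2 * (quad d \<Lambda> w q)^2 + \<sigma>^2 * quad d \<Lambda> q q
       else (quad d \<Lambda> w q)^2)"
  proof (cases "j = j'")
    case True
    then show ?thesis using assms prob_space_ES[of M \<sigma>]
      by (simp add: xs_val_eq es_m1 es_m2 G_wqwq G_ab prob_space.prob_space power2_eq_square)
  next
    case False
    then show ?thesis using assms prob_space_ES[of M \<sigma>]
      by (simp add: xs_val_neq es_m1 es_m2 G_wqwq G_ab prob_space.prob_space power2_eq_square)
  qed
  finally show ?thesis .
qed

end

definition ht :: "nat \<Rightarrow> nat \<Rightarrow> (nat \<Rightarrow> real) \<Rightarrow> (nat \<Rightarrow> real) \<Rightarrow> (nat \<Rightarrow> nat \<Rightarrow> real) \<times> (nat \<Rightarrow> real) \<Rightarrow> real" where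
  "ht d M w q p = (1 / real M) * (\<Sum>j<M. Yj d w q j p)"

lemma ht_int: "integrable (P0 d M \<Lambda> \<sigma>) (ht d M w q)"
  unfolding ht_def[abs_def]
  by (intro integrable_mult_right Bochner_Integration.integrable_sum Yj_int) auto

lemma ht_sq: "(ht d M w q p)^2 = (1 / real M)^2 * (\<Sum>j<M. \<Sum>j'<M. Yj d w q j p * Yj d w q j' p)"
  unfolding ht_def by (simp add: power2_eq_square sum_product)

lemma ht2_int: "integrable (P0 d M \<Lambda> \<sigma>) (\<lambda>p. (ht d M w q p)^2)"
  unfolding ht_sq
  by (intro integrable_mult_right Bochner_Integration.integrable_sum YY_int) auto

lemma ht2_val:
  assumes exA: "\<exists>A. \<forall>i<d. \<forall>j<d. (\<Sum>l<d. A i l * A j l) = \<Lambda> i j"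
    and M: "M \<ge> 1" and wq: "quad d \<Lambda> w q = 0"
  shows "(\<integral>p. (ht d M w q p)^2 \<partial>P0 d M \<Lambda> \<sigma>) = (quad d \<Lambda> w w + \<sigma>^2) * quad d \<Lambda> q q / real M"
proof -
  have "(\<integral>p. (ht d M w q p)^2 \<partial>P0 d M \<Lambda> \<sigma>)
      = (1 / real M)^2 * (\<Sum>j<M. \<Sum>j'<M. (\<integral>p. Yj d w q j p * Yj d w q j' p \<partial>P0 d M \<Lambda> \<sigma>))"
  proof -
    have "(\<integral>p. (\<Sum>j<M. \<Sum>j'<M. Yj d w q j p * Yj d w q j' p) \<partial>P0 d M \<Lambda> \<sigma>)
       = (\<Sum>j<M. (\<integral>p. (\<Sum>j'<M. Yj d w q j p * Yj d w q j' p) \<partial>P0 d M \<Lambda> \<sigma>))"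
      by (rule Bochner_Integration.integral_sum) (auto intro!: Bochner_Integration.integrable_sum YY_int)
    also have "\<dots> = (\<Sum>j<M. \<Sum>j'<M. (\<integral>p. Yj d w q j p * Yj d w q j' p \<partial>P0 d M \<Lambda> \<sigma>))"
      by (intro sum.cong refl Bochner_Integration.integral_sum) (auto intro!: YY_int)
    finally show ?thesis unfolding ht_sq by simp
  qed
  also have "\<dots> = (1 / real M)^2 * (\<Sum>j<M. \<Sum>j'<M. (if j = j' then (quad d \<Lambda> w w + \<sigma>^2) * quad d \<Lambda> q q else 0))"
    using YY_val[OF exA] wq by (intro arg_cong2[where f="(*)"] refl sum.cong) (auto simp: algebra_simps)
  also have "\<dots> = (quad d \<Lambda> w w + \<sigma>^2) * quad d \<Lambda> q q / real M"
    using M by (simp add: sum.delta power2_eq_square)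
  finally show ?thesis .
qed

definition Gam :: "nat \<Rightarrow> (nat \<Rightarrow> nat \<Rightarrow> real) \<Rightarrow> (nat \<Rightarrow> real) \<Rightarrow> nat \<Rightarrow> nat \<Rightarrow> real" where
  "Gam d Q v l m = (\<Sum>p<d. Q l p * v p * Q m p)"

lemma mmul_WPV: "mmul (d+1) (WPV d c) E d j = E d j / c"
  unfolding mmul_def WPV_def by (simp add: lessThan_Suc)

lemma mmul_KQ: "mmul (d+1) (mtrans E) (WKQ d Q v c) jj m = (if m < d then c * (\<Sum>l<d. E l jj * Gam d Q v l m) else 0)"
  unfolding mmul_def mtrans_def WKQ_def Gam_def
  by (auto simp: lessThan_Suc sum_distrib_left ac_simps intro!: sum.cong)

lemma mmul_KQE: "mmul (d+1) (mmul (d+1) (mtrans E) (WKQ d Q v c)) E jj j = c * (\<Sum>m<d. (\<Sum>l<d. E l jj * Gam d Q v l m) * E m j)"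
  unfolding mmul_def[of "d+1" "mmul (d+1) (mtrans E) (WKQ d Q v c)" E] mmul_KQ
  by (simp add: lessThan_Suc sum_distrib_left ac_simps)

lemma fk_eq:
  assumes c: "c \<noteq> 0"
  shows "fk d N M Q lam c k (Ehat d M w xs eps xq) =
    (\<Sum>jj<M. (lin d w (xs jj) + eps jj) * (\<Sum>m<d. (\<Sum>l<d. xs jj l * Gam d Q (Vk d N lam k) l m) * xq m)) / real M"
proof -
  let ?E = "Ehat d M w xs eps xq"
  have E0: "?E d M = 0" unfolding Ehat_def by simp
  have "fk d N M Q lam c k ?E = (\<Sum>jj<M+1. (?E d jj / c) * (c * (\<Sum>m<d. (\<Sum>l<d. ?E l jj * Gam d Q (Vk d N lam k) l m) * ?E m M))) / real M"
    unfolding fk_def lsa_def E0 mmul_def[of "M+1"] mmul_WPV mmul_KQE by simp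
  also have "\<dots> = (\<Sum>jj<M. (?E d jj) * (\<Sum>m<d. (\<Sum>l<d. ?E l jj * Gam d Q (Vk d N lam k) l m) * ?E m M)) / real M"
    using c E0 by (simp add: lessThan_Suc)
  also have "\<dots> = (\<Sum>jj<M. (lin d w (xs jj) + eps jj) * (\<Sum>m<d. (\<Sum>l<d. xs jj l * Gam d Q (Vk d N lam k) l m) * xq m)) / real M"
    unfolding Ehat_def lin_def by (intro arg_cong2[where f="(/)"] refl sum.cong arg_cong2[where f="(*)"]) auto
  finally show ?thesis .
qed

definition hvec :: "nat \<Rightarrow> nat \<Rightarrow> (nat \<Rightarrow> real) \<Rightarrow> (nat \<Rightarrow> nat \<Rightarrow> real) \<times> (nat \<Rightarrow> real) \<Rightarrow> nat \<Rightarrow> real" where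
  "hvec d M w p l = (1 / real M) * (\<Sum>jj<M. (lin d w (fst p jj) + snd p jj) * fst p jj l)"

definition gk :: "nat \<Rightarrow> nat \<Rightarrow> (nat \<Rightarrow> real) \<Rightarrow> (nat \<Rightarrow> nat \<Rightarrow> real) \<Rightarrow> (nat \<Rightarrow> nat \<Rightarrow> real) \<times> (nat \<Rightarrow> real) \<Rightarrow> nat \<Rightarrow> real" where
  "gk d M w \<Gamma> p m = (\<Sum>l<d. hvec d M w p l * \<Gamma> l m) - w m"

lemma f_minus:
  assumes c: "c \<noteq> 0"
  shows "fk d N M Q lam c k (Ehat d M w xs eps xq) - lin d w xq = lin d (gk d M w (Gam d Q (Vk d N lam k)) (xs, eps)) xq"
proof -
  let ?G = "Gam d Q (Vk d N lam k)"
  let ?y = "\<lambda>jj. lin d w (xs jj) + eps jj"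
  have "lin d (gk d M w ?G (xs, eps)) xq = (\<Sum>m<d. (\<Sum>l<d. hvec d M w (xs, eps) l * ?G l m) * xq m) - lin d w xq"
    unfolding lin_def gk_def by (simp add: algebra_simps sum_subtractf)
  also have "(\<Sum>m<d. (\<Sum>l<d. hvec d M w (xs, eps) l * ?G l m) * xq m) = (\<Sum>m<d. \<Sum>l<d. \<Sum>jj<M. (?y jj * xs jj l * ?G l m * xq m) / real M)"
    unfolding hvec_def by (simp add: sum_distrib_left sum_distrib_right sum_divide_distrib)
  also have "\<dots> = (\<Sum>m<d. \<Sum>jj<M. \<Sum>l<d. (?y jj * xs jj l * ?G l m * xq m) / real M)"
    by (intro sum.cong refl sum.swap)
  also have "\<dots> = (\<Sum>jj<M. \<Sum>m<d. \<Sum>l<d. (?y jj * xs jj l * ?G l m * xq m) / real M)"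
    by (rule sum.swap)
  also have "\<dots> = fk d N M Q lam c k (Ehat d M w xs eps xq)"
    unfolding fk_eq[OF c] by (simp add: sum_distrib_left sum_distrib_right sum_divide_distrib ac_simps)
  finally show ?thesis by simp
qed

lemma ht_hvec: "ht d M w (\<lambda>l. Q l k) p = (\<Sum>l<d. Q l k * hvec d M w p l)"
  unfolding ht_def hvec_def Yj_def lin_def
  by (simp add: sum_distrib_left sum_distrib_right ac_simps sum.swap[of _ "{..<d}" "{..<M}"])

context
  fixes d :: nat and Q \<Lambda> :: "nat \<Rightarrow> nat \<Rightarrow> real" and lam :: "nat \<Rightarrow> real"
  assumes orth: "\<forall>i<d. \<forall>j<d. (\<Sum>l<d. Q l i * Q l j) = (if i = j then 1 else 0)"
    and eig: "\<forall>i<d. \<forall>j<d. \<Lambda> i j = (\<Sum>l<d. Q i l * lam l * Q j l)"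
begin

lemma quad_eig: "quad d \<Lambda> a b = (\<Sum>k<d. lam k * (\<Sum>m<d. Q m k * a m) * (\<Sum>n<d. Q n k * b n))"
proof -
  have "quad d \<Lambda> a b = (\<Sum>i<d. \<Sum>j<d. \<Sum>k<d. a i * Q i k * lam k * Q j k * b j)"
    unfolding quad_def using eig by (intro sum.cong refl) (simp add: sum_distrib_left sum_distrib_right ac_simps)
  also have "\<dots> = (\<Sum>i<d. \<Sum>k<d. \<Sum>j<d. a i * Q i k * lam k * Q j k * b j)"
    by (intro sum.cong refl sum.swap)
  also have "\<dots> = (\<Sum>k<d. \<Sum>i<d. \<Sum>j<d. a i * Q i k * lam k * Q j k * b j)"
    by (rule sum.swap)
  also have "\<dots> = (\<Sum>k<d. lam k * (\<Sum>m<d. Q m k * a m) * (\<Sum>n<d. Q n k * b n))"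
    by (simp add: sum_distrib_left sum_distrib_right ac_simps)
  finally show ?thesis .
qed

lemma Qt_w:
  assumes "k < d"
  shows "(\<Sum>m<d. Q m k * (\<Sum>p<d. Q m p * s p)) = s k"
proof -
  have "(\<Sum>m<d. Q m k * (\<Sum>p<d. Q m p * s p)) = (\<Sum>m<d. \<Sum>p<d. Q m k * Q m p * s p)"
    by (simp add: sum_distrib_left ac_simps)
  also have "\<dots> = (\<Sum>p<d. \<Sum>m<d. Q m k * Q m p * s p)" by (rule sum.swap)
  also have "\<dots> = (\<Sum>p<d. (\<Sum>m<d. Q m k * Q m p) * s p)" by (simp add: sum_distrib_right)
  also have "\<dots> = (\<Sum>p<d. (if k = p then s p else 0))"
    using orth assms by (intro sum.cong refl) auto
  also have "\<dots> = s k" using assms by simp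
  finally show ?thesis .
qed

lemma Qt_q:
  assumes "k < d" "i < d"
  shows "(\<Sum>n<d. Q n k * Q n i) = (if k = i then 1 else 0)"
  using orth assms by simp

lemma Qt_Gam:
  assumes "k < d"
  shows "(\<Sum>m<d. Q m k * Gam d Q v l m) = Q l k * v k"
proof -
  have "(\<Sum>m<d. Q m k * Gam d Q v l m) = (\<Sum>m<d. \<Sum>p<d. Q m k * (Q l p * v p * Q m p))"
    unfolding Gam_def by (simp add: sum_distrib_left)
  also have "\<dots> = (\<Sum>p<d. \<Sum>m<d. Q m k * (Q l p * v p * Q m p))" by (rule sum.swap)
  also have "\<dots> = (\<Sum>p<d. (Q l p * v p) * (\<Sum>m<d. Q m k * Q m p))"
    by (simp add: sum_distrib_left ac_simps)
  also have "\<dots> = (\<Sum>p<d. (if k = p then Q l p * v p else 0))"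
    using orth assms by (intro sum.cong refl) auto
  also have "\<dots> = Q l k * v k" using assms by simp
  finally show ?thesis .
qed

lemma Qt_gk:
  assumes "k < d"
  shows "(\<Sum>m<d. Q m k * gk d M (\<lambda>i. \<Sum>p<d. Q i p * s p) (Gam d Q v) p m)
     = v k * ht d M (\<lambda>i. \<Sum>p<d. Q i p * s p) (\<lambda>l. Q l k) p - s k"
proof -
  let ?w = "\<lambda>i. \<Sum>p<d. Q i p * s p"
  have "(\<Sum>m<d. Q m k * gk d M ?w (Gam d Q v) p m)
      = (\<Sum>m<d. \<Sum>l<d. hvec d M ?w p l * (Q m k * Gam d Q v l m)) - (\<Sum>m<d. Q m k * ?w m)"
    unfolding gk_def by (simp add: algebra_simps sum_subtractf sum_distrib_left)
  also have "(\<Sum>m<d. \<Sum>l<d. hvec d M ?w p l * (Q m k * Gam d Q v l m)) = (\<Sum>l<d. hvec d M ?w p l * (\<Sum>m<d. Q m k * Gam d Q v l m))"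
    by (subst sum.swap) (simp add: sum_distrib_left)
  also have "\<dots> = (\<Sum>l<d. hvec d M ?w p l * (Q l k * v k))"
    using Qt_Gam[OF assms] by simp
  also have "\<dots> = v k * ht d M ?w (\<lambda>l. Q l k) p"
    unfolding ht_hvec by (simp add: sum_distrib_left ac_simps)
  finally show ?thesis using Qt_w[OF assms] by simp
qed

lemma quad_gk:
  "quad d \<Lambda> (gk d M (\<lambda>i. \<Sum>p<d. Q i p * s p) (Gam d Q v) p) (gk d M (\<lambda>i. \<Sum>p<d. Q i p * s p) (Gam d Q v) p)
   = (\<Sum>k<d. lam k * (v k * ht d M (\<lambda>i. \<Sum>p<d. Q i p * s p) (\<lambda>l. Q l k) p - s k)^2)"
  unfolding quad_eig by (intro sum.cong refl) (simp add: Qt_gk power2_eq_square)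

end

lemma m_xs_comp: "j \<in> {..<M} \<Longrightarrow> i \<in> {..<d} \<Longrightarrow> (\<lambda>xs. xs j i) \<in> borel_measurable (XS d M \<Lambda>)"
proof -
  assume j: "j \<in> {..<M}" and i: "i \<in> {..<d}"
  have 1: "(\<lambda>xs. xs j) \<in> XS d M \<Lambda> \<rightarrow>\<^sub>M gauss_vec d \<Lambda>"
    using j by (rule measurable_component_singleton)
  have 2: "(\<lambda>x. x i) \<in> gauss_vec d \<Lambda> \<rightarrow>\<^sub>M borel"
    using i by (subst measurable_cong_sets[OF sets_gauss_vec refl]) (rule measurable_component_singleton)
  show ?thesis using measurable_compose[OF 1 2] .
qed

lemma m_xs[measurable]: "j \<in> {..<M} \<Longrightarrow> i \<in> {..<d} \<Longrightarrow> (\<lambda>x. fst x j i) \<in> borel_measurable (P0 d M \<Lambda> \<sigma>)"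
  using measurable_compose[OF measurable_fst m_xs_comp] by simp

lemma m_eps[measurable]: "j \<in> {..<M} \<Longrightarrow> (\<lambda>x. snd x j) \<in> borel_measurable (P0 d M \<Lambda> \<sigma>)"
proof -
  assume j: "j \<in> {..<M}"
  have "(\<lambda>e. e j) \<in> ES M \<sigma> \<rightarrow>\<^sub>M normal_sigma \<sigma>"
    using j by (rule measurable_component_singleton)
  then have "(\<lambda>e. e j) \<in> borel_measurable (ES M \<sigma>)"
    by (subst measurable_cong_sets[OF refl sets_normal_sigma[symmetric]])
  then show ?thesis using measurable_compose[OF measurable_snd] by simp
qed

lemma hvec_meas[measurable]: "l \<in> {..<d} \<Longrightarrow> (\<lambda>p. hvec d M w p l) \<in> borel_measurable (P0 d M \<Lambda> \<sigma>)"
  unfolding hvec_def lin_def by measurable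

lemma gk_meas[measurable]: "(\<lambda>p. gk d M w \<Gamma> p m) \<in> borel_measurable (P0 d M \<Lambda> \<sigma>)"
  unfolding gk_def by measurable

lemma quad_gk_meas: "(\<lambda>p. quad d \<Lambda> (gk d M w \<Gamma> p) (gk d M w \<Gamma> p)) \<in> borel_measurable (P0 d M \<Lambda> \<sigma>)"
  unfolding quad_def by measurable

lemma H_meas: "(\<lambda>z. (lin d (gk d M w \<Gamma> (fst z)) (snd z))^2) \<in> borel_measurable (P0 d M \<Lambda> \<sigma> \<Otimes>\<^sub>M gauss_vec d \<Lambda>)"
  unfolding lin_def by measurable

lemma loss_eq:
  assumes exA: "\<exists>A. \<forall>i<d. \<forall>j<d. (\<Sum>l<d. A i l * A j l) = \<Lambda> i j"
    and psd: "\<forall>u. (\<Sum>i<d. \<Sum>j<d. u i * \<Lambda> i j * u j) \<ge> 0"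
    and c: "c \<noteq> 0"
  shows "icl_loss d M \<Lambda> \<sigma> w (fk d N M Q lam c k)
     = (\<integral>p. quad d \<Lambda> (gk d M w (Gam d Q (Vk d N lam k)) p) (gk d M w (Gam d Q (Vk d N lam k)) p) \<partial>P0 d M \<Lambda> \<sigma>)"
proof -
  let ?g = "gk d M w (Gam d Q (Vk d N lam k))"
  let ?G = "gauss_vec d \<Lambda>"
  interpret G: prob_space ?G by (rule prob_space_gauss_vec)
  have "icl_loss d M \<Lambda> \<sigma> w (fk d N M Q lam c k) = (\<integral>z. (lin d (?g (fst z)) (snd z))^2 \<partial>(P0 d M \<Lambda> \<sigma> \<Otimes>\<^sub>M ?G))"
    unfolding icl_loss_def data_measure_def
  proof (rule Bochner_Integration.integral_cong[OF refl])
    fix z :: "((nat \<Rightarrow> nat \<Rightarrow> real) \<times> (nat \<Rightarrow> real)) \<times> (nat \<Rightarrow> real)"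
    obtain xs eps xq where z: "z = ((xs, eps), xq)" by (metis prod.exhaust)
    show "(case z of (x, xq) \<Rightarrow> (case x of (xs, eps) \<Rightarrow> (\<lambda>xq. (fk d N M Q lam c k (Ehat d M w xs eps xq) - (\<Sum>l<d. w l * xq l))\<^sup>2)) xq)
        = (lin d (?g (fst z)) (snd z))^2"
      using f_minus[OF c, of d N M Q lam k w xs eps xq] unfolding z lin_def by simp
  qed
  also have "\<dots> = enn2real (\<integral>\<^sup>+z. ennreal ((lin d (?g (fst z)) (snd z))^2) \<partial>(P0 d M \<Lambda> \<sigma> \<Otimes>\<^sub>M ?G))"
    by (rule integral_eq_nn_integral) (auto intro: H_meas)
  also have "(\<integral>\<^sup>+z. ennreal ((lin d (?g (fst z)) (snd z))^2) \<partial>(P0 d M \<Lambda> \<sigma> \<Otimes>\<^sub>M ?G))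
      = (\<integral>\<^sup>+p. \<integral>\<^sup>+x. ennreal ((lin d (?g p) x)^2) \<partial>?G \<partial>P0 d M \<Lambda> \<sigma>)"
    using G.nn_integral_fst[of "\<lambda>z. ennreal ((lin d (?g (fst z)) (snd z))^2)" "P0 d M \<Lambda> \<sigma>"] H_meas
    by simp
  also have "\<dots> = (\<integral>\<^sup>+p. ennreal (quad d \<Lambda> (?g p) (?g p)) \<partial>P0 d M \<Lambda> \<sigma>)"
  proof (rule nn_integral_cong)
    fix p
    have int: "integrable ?G (\<lambda>x. (lin d (?g p) x)^2)"
      using gv_int[of d \<Lambda> "[?g p, ?g p]"] by (simp add: power2_eq_square)
    have "(\<integral>\<^sup>+x. ennreal ((lin d (?g p) x)^2) \<partial>?G) = ennreal (\<integral>x. (lin d (?g p) x)^2 \<partial>?G)"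
      by (rule nn_integral_eq_integral[OF int]) auto
    also have "(\<integral>x. (lin d (?g p) x)^2 \<partial>?G) = quad d \<Lambda> (?g p) (?g p)"
      using gv_M2[OF exA, of "?g p" "?g p"] by (simp add: power2_eq_square)
    finally show "(\<integral>\<^sup>+x. ennreal ((lin d (?g p) x)^2) \<partial>?G) = ennreal (quad d \<Lambda> (?g p) (?g p))" .
  qed
  also have "enn2real \<dots> = (\<integral>p. quad d \<Lambda> (?g p) (?g p) \<partial>P0 d M \<Lambda> \<sigma>)"
    using psd by (intro integral_eq_nn_integral[symmetric] quad_gk_meas) (auto simp: quad_def)
  finally show ?thesis .
qed

lemma Gfun_int:
  "integrable (P0 d M \<Lambda> \<sigma>) (\<lambda>p. \<Sum>k<d. lam k * (v k * ht d M w (\<lambda>l. Q l k) p - s k)^2)"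
proof -
  interpret P: prob_space "P0 d M \<Lambda> \<sigma>" by (rule prob_space_P0)
  have eq: "lam k * (v k * ht d M w (\<lambda>l. Q l k) p - s k)^2 =
     (lam k * (v k)^2) * (ht d M w (\<lambda>l. Q l k) p)^2 + (- 2 * lam k * v k * s k) * ht d M w (\<lambda>l. Q l k) p + lam k * (s k)^2" for k p
    by (simp add: power2_eq_square algebra_simps)
  have "integrable (P0 d M \<Lambda> \<sigma>) (\<lambda>p. \<Sum>k<d. (lam k * (v k)^2) * (ht d M w (\<lambda>l. Q l k) p)^2 + (- 2 * lam k * v k * s k) * ht d M w (\<lambda>l. Q l k) p + lam k * (s k)^2)"
    by (intro Bochner_Integration.integrable_sum Bochner_Integration.integrable_add integrable_mult_right ht2_int ht_int P.integrable_const)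
  then show ?thesis by (simp only: eq)
qed

theorem theorem4p4:
  fixes d N M r r' :: nat and \<sigma> c1 c2 :: real
    and \<Lambda> Q :: "nat \<Rightarrow> nat \<Rightarrow> real" and lam s :: "nat \<Rightarrow> real"
  assumes "d \<ge> 1" and "N \<ge> 1" and "M \<ge> 1" and "\<sigma> \<ge> 0"
    and sym: "\<forall>i<d. \<forall>j<d. \<Lambda> i j = \<Lambda> j i"
    and psd: "\<forall>u. (\<Sum>i<d. \<Sum>j<d. u i * \<Lambda> i j * u j) \<ge> 0"
    and orth: "\<forall>i<d. \<forall>j<d. (\<Sum>l<d. Q l i * Q l j) = (if i = j then 1 else 0)"
    and eig: "\<forall>i<d. \<forall>j<d. \<Lambda> i j = (\<Sum>l<d. Q i l * lam l * Q j l)"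
    and sorted: "\<forall>i j. i \<le> j \<and> j < d \<longrightarrow> lam j \<le> lam i"
    and nonneg: "\<forall>i<d. lam i \<ge> 0"
    and "r \<le> r'" and "r' \<le> d"
    and "c1 \<noteq> 0" and "c2 \<noteq> 0"
    and s0: "\<forall>i. r \<le> i \<and> i < d \<longrightarrow> s i = 0"
  shows "icl_loss d M \<Lambda> \<sigma> (\<lambda>i. \<Sum>l<d. Q i l * s l) (fk d N M Q lam c2 r')
         - icl_loss d M \<Lambda> \<sigma> (\<lambda>i. \<Sum>l<d. Q i l * s l) (fk d N M Q lam c1 r)
       = (1 / real M) * ((\<Sum>i<d. lam i * (s i)\<^sup>2) + \<sigma>\<^sup>2) *
         (\<Sum>i\<in>{r..<r'}. (real N * lam i / ((real N + 1) * lam i + trD d lam))\<^sup>2)"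
proof -
  note rr = \<open>r \<le> r'\<close> \<open>r' \<le> d\<close>
  define w where "w = (\<lambda>i. \<Sum>l<d. Q i l * s l)"
  define v1 where "v1 = Vk d N lam r"
  define v2 where "v2 = Vk d N lam r'"
  define h where "h = (\<lambda>k. ht d M w (\<lambda>l. Q l k))"
  interpret P: prob_space "P0 d M \<Lambda> \<sigma>" by (rule prob_space_P0)
  have exA: "\<exists>A. \<forall>i<d. \<forall>j<d. (\<Sum>l<d. A i l * A j l) = \<Lambda> i j"
  proof (intro exI allI impI)
    fix i j assume i: "i < d" and j: "j < d"
    have "(\<Sum>l<d. (Q i l * sqrt (lam l)) * (Q j l * sqrt (lam l))) = (\<Sum>l<d. Q i l * lam l * Q j l)"
      using nonneg by (intro sum.cong refl) (auto simp: ac_simps)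
    also have "\<dots> = \<Lambda> i j" using eig i j by simp
    finally show "(\<Sum>l<d. (Q i l * sqrt (lam l)) * (Q j l * sqrt (lam l))) = \<Lambda> i j" .
  qed
  have L: "icl_loss d M \<Lambda> \<sigma> w (fk d N M Q lam c N') = (\<integral>p. (\<Sum>k<d. lam k * (Vk d N lam N' k * h k p - s k)^2) \<partial>P0 d M \<Lambda> \<sigma>)"
    if "c \<noteq> 0" for c N'
    unfolding loss_eq[OF exA psd that] w_def h_def
    using quad_gk[OF orth eig] by simp
  have quad_ww: "quad d \<Lambda> w w = (\<Sum>i<d. lam i * (s i)^2)"
    unfolding quad_eig[OF orth eig] w_def
    by (intro sum.cong refl) (simp add: Qt_w[OF orth eig] power2_eq_square)
  have quad_qq: "quad d \<Lambda> (\<lambda>l. Q l k) (\<lambda>l. Q l k) = lam k" if "k < d" for k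
  proof -
    have "quad d \<Lambda> (\<lambda>l. Q l k) (\<lambda>l. Q l k) = (\<Sum>j<d. (if j = k then lam j else 0))"
      unfolding quad_eig[OF orth eig] using that orth by (intro sum.cong refl) auto
    then show ?thesis using that by simp
  qed
  have quad_wq: "quad d \<Lambda> w (\<lambda>l. Q l k) = 0" if "r \<le> k" "k < d" for k
  proof -
    have "quad d \<Lambda> w (\<lambda>l. Q l k) = (\<Sum>j<d. (if j = k then lam j * s j else 0))"
      unfolding quad_eig[OF orth eig] w_def using that orth
      by (intro sum.cong refl) (auto simp: Qt_w[OF orth eig])
    then show ?thesis using that s0 by simp
  qed
  have int: "integrable (P0 d M \<Lambda> \<sigma>) (\<lambda>p. \<Sum>k<d. lam k * (Vk d N lam N' k * h k p - s k)^2)" for N'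
    unfolding h_def by (rule Gfun_int)
  have diff: "(\<Sum>k<d. lam k * (v2 k * h k p - s k)^2) - (\<Sum>k<d. lam k * (v1 k * h k p - s k)^2)
      = (\<Sum>k\<in>{r..<r'}. lam k * (v2 k)^2 * (h k p)^2)" for p
  proof -
    have "(\<Sum>k<d. lam k * (v2 k * h k p - s k)^2) - (\<Sum>k<d. lam k * (v1 k * h k p - s k)^2)
        = (\<Sum>k<d. (if k \<in> {r..<r'} then lam k * (v2 k)^2 * (h k p)^2 else 0))"
      unfolding sum_subtractf[symmetric]
    proof (intro sum.cong refl)
      fix k assume k: "k \<in> {..<d}"
      show "lam k * (v2 k * h k p - s k)^2 - lam k * (v1 k * h k p - s k)^2
          = (if k \<in> {r..<r'} then lam k * (v2 k)^2 * (h k p)^2 else 0)"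
      proof (cases "k < r")
        case True then show ?thesis using rr by (simp add: v1_def v2_def Vk_def)
      next
        case False
        then have "s k = 0" using s0 k by auto
        then show ?thesis using False rr by (auto simp: v1_def v2_def Vk_def power2_eq_square)
      qed
    qed
    also have "\<dots> = (\<Sum>k\<in>{..<d} \<inter> {r..<r'}. lam k * (v2 k)^2 * (h k p)^2)"
      by (rule sum.inter_restrict[symmetric]) simp
    also have "{..<d} \<inter> {r..<r'} = {r..<r'}" using rr by auto
    finally show ?thesis .
  qed
  have "icl_loss d M \<Lambda> \<sigma> w (fk d N M Q lam c2 r') - icl_loss d M \<Lambda> \<sigma> w (fk d N M Q lam c1 r)
     = (\<integral>p. (\<Sum>k<d. lam k * (v2 k * h k p - s k)^2) - (\<Sum>k<d. lam k * (v1 k * h k p - s k)^2) \<partial>P0 d M \<Lambda> \<sigma>)"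
    unfolding L[OF \<open>c2 \<noteq> 0\<close>] L[OF \<open>c1 \<noteq> 0\<close>] v1_def v2_def
    by (rule Bochner_Integration.integral_diff[symmetric]) (rule int)+
  also have "\<dots> = (\<integral>p. (\<Sum>k\<in>{r..<r'}. lam k * (v2 k)^2 * (h k p)^2) \<partial>P0 d M \<Lambda> \<sigma>)"
    by (simp only: diff)
  also have "\<dots> = (\<Sum>k\<in>{r..<r'}. lam k * (v2 k)^2 * (\<integral>p. (h k p)^2 \<partial>P0 d M \<Lambda> \<sigma>))"
    unfolding h_def
    by (subst Bochner_Integration.integral_sum) (auto intro: ht2_int)
  also have "\<dots> = (\<Sum>k\<in>{r..<r'}. lam k * (v2 k)^2 * ((quad d \<Lambda> w w + \<sigma>^2) * lam k / real M))"
  proof (intro sum.cong refl)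
    fix k assume k: "k \<in> {r..<r'}"
    then have "k < d" using rr by auto
    then show "lam k * (v2 k)^2 * (\<integral>p. (h k p)^2 \<partial>P0 d M \<Lambda> \<sigma>) = lam k * (v2 k)^2 * ((quad d \<Lambda> w w + \<sigma>^2) * lam k / real M)"
      unfolding h_def using ht2_val[OF exA \<open>M \<ge> 1\<close> quad_wq] k quad_qq by auto
  qed
  also have "\<dots> = (1 / real M) * ((\<Sum>i<d. lam i * (s i)\<^sup>2) + \<sigma>\<^sup>2) *
         (\<Sum>i\<in>{r..<r'}. (real N * lam i / ((real N + 1) * lam i + trD d lam))\<^sup>2)"
    unfolding quad_ww sum_distrib_left
    by (intro sum.cong refl) (auto simp: v2_def Vk_def power2_eq_square field_simps)
  finally show ?thesis unfolding w_def .
qed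

end
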